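(* Let $F$ be a forest and let $U$ be a unicyclic graph vertex-disjoint from $F$. (i) Every nontrivial 2-switch over $F$ is a p-switch over $F$. (ii) Let $\tau=\tau_A$, $A=\binom{a\ b}{c\ d}$, be a 2-switch over $G=F\,\dot\cup\, U$ (the disjoint union). If $ab\in E(F)$ and $cd\in E(\operatorname{Forest}(U))$, then $\tau$ is a p-switch over $G$.
   Context: Graphs are finite, simple, undirected, labeled. A unicyclic graph is a connected graph with exactly one cycle; a pseudoforest is a graph each of whose components is a tree or a unicyclic graph. For vertices $a,b,c,d$, $A=\binom{a\ b}{c\ d}$ is interchangeable in $G$ if $ab,cd\in E(G)$, $\{a,b\}\cap\{c,d\}=\varnothing$, $ac,bd\notin E(G)$; the 2-switch $\tau_A$ sends $G$ to $G-ab-cd+ac+bd$ if $A$ is interchangeable and to $G$ otherwise (trivial). A nontrivial 2-switch $\tau$ over a pseudoforest $G$ is a p-switch if $\tau(G)$ is a pseudoforest. $\operatorname{Cycles}(H)$ is the subgraph induced by vertices lying on some cycle of $H$; $\operatorname{Forest}(H)=H-E(\operatorname{Cycles}(H))$. *)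

theory Defs
  imports Main
begin

type_synonym 'a graph = "'a set \<times> 'a set set"

definition verts :: "'a graph \<Rightarrow> 'a set" where "verts G = fst G"
definition edges :: "'a graph \<Rightarrow> 'a set set" where "edges G = snd G"

definition wf_graph :: "'a graph \<Rightarrow> bool" where
  "wf_graph G \<longleftrightarrow> finite (verts G) \<and>
     (\<forall>e\<in>edges G. \<exists>x y. x \<noteq> y \<and> e = {x, y} \<and> x \<in> verts G \<and> y \<in> verts G)"

definition adj :: "'a graph \<Rightarrow> 'a \<Rightarrow> 'a \<Rightarrow> bool" where
  "adj G x y \<longleftrightarrow> {x, y} \<in> edges G"

definition reach :: "'a graph \<Rightarrow> 'a \<Rightarrow> 'a \<Rightarrow> bool" where
  "reach G x y \<longleftrightarrow> x \<in> verts G \<and> (adj G)\<^sup>*\<^sup>* x y"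

definition connected_graph :: "'a graph \<Rightarrow> bool" where
  "connected_graph G \<longleftrightarrow> verts G \<noteq> {} \<and> (\<forall>x\<in>verts G. \<forall>y\<in>verts G. reach G x y)"

definition is_cycle :: "'a graph \<Rightarrow> 'a set set \<Rightarrow> bool" where
  "is_cycle G C \<longleftrightarrow> (\<exists>vs. length vs \<ge> 3 \<and> distinct vs \<and> set vs \<subseteq> verts G \<and>
       C = {{vs ! i, vs ! ((i + 1) mod length vs)} | i. i < length vs} \<and> C \<subseteq> edges G)"

definition acyclic_graph :: "'a graph \<Rightarrow> bool" where
  "acyclic_graph G \<longleftrightarrow> \<not> (\<exists>C. is_cycle G C)"

definition is_forest :: "'a graph \<Rightarrow> bool" where
  "is_forest G \<longleftrightarrow> wf_graph G \<and> acyclic_graph G"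

definition is_tree :: "'a graph \<Rightarrow> bool" where
  "is_tree G \<longleftrightarrow> wf_graph G \<and> connected_graph G \<and> acyclic_graph G"

definition unicyclic :: "'a graph \<Rightarrow> bool" where
  "unicyclic G \<longleftrightarrow> wf_graph G \<and> connected_graph G \<and> (\<exists>!C. is_cycle G C)"

definition induced :: "'a graph \<Rightarrow> 'a set \<Rightarrow> 'a graph" where
  "induced G S = (S, {e \<in> edges G. e \<subseteq> S})"

definition component :: "'a graph \<Rightarrow> 'a \<Rightarrow> 'a graph" where
  "component G v = induced G {y. reach G v y}"

definition pseudoforest :: "'a graph \<Rightarrow> bool" where
  "pseudoforest G \<longleftrightarrow> wf_graph G \<and>
     (\<forall>v\<in>verts G. is_tree (component G v) \<or> unicyclic (component G v))"

definition cycle_verts :: "'a graph \<Rightarrow> 'a set" where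
  "cycle_verts G = {v. \<exists>C. is_cycle G C \<and> v \<in> \<Union>C}"

definition Cycles :: "'a graph \<Rightarrow> 'a graph" where
  "Cycles G = induced G (cycle_verts G)"

definition Forest :: "'a graph \<Rightarrow> 'a graph" where
  "Forest G = (verts G, edges G - edges (Cycles G))"

definition gunion :: "'a graph \<Rightarrow> 'a graph \<Rightarrow> 'a graph" where
  "gunion G H = (verts G \<union> verts H, edges G \<union> edges H)"

definition interchangeable :: "'a graph \<Rightarrow> 'a \<Rightarrow> 'a \<Rightarrow> 'a \<Rightarrow> 'a \<Rightarrow> bool" where
  "interchangeable G a b c d \<longleftrightarrow> {a, b} \<in> edges G \<and> {c, d} \<in> edges G \<and>
     {a, b} \<inter> {c, d} = {} \<and> {a, c} \<notin> edges G \<and> {b, d} \<notin> edges G"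

definition two_switch :: "'a graph \<Rightarrow> 'a \<Rightarrow> 'a \<Rightarrow> 'a \<Rightarrow> 'a \<Rightarrow> 'a graph" where
  "two_switch G a b c d =
     (if interchangeable G a b c d
      then (verts G, (edges G - {{a, b}, {c, d}}) \<union> {{a, c}, {b, d}})
      else G)"

definition p_switch :: "'a graph \<Rightarrow> 'a \<Rightarrow> 'a \<Rightarrow> 'a \<Rightarrow> 'a \<Rightarrow> bool" where
  "p_switch G a b c d \<longleftrightarrow> pseudoforest G \<and> interchangeable G a b c d \<and>
     pseudoforest (two_switch G a b c d)"

end

theory Submission
  imports Defs
begin


fun pedges :: "'a list \<Rightarrow> 'a set set" where
  "pedges (x # y # r) = insert {x, y} (pedges (y # r))"
| "pedges _ = {}"

definition cedges :: "'a list \<Rightarrow> 'a set set" where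
  "cedges vs = insert {last vs, hd vs} (pedges vs)"

lemma pedges_nth: "pedges vs = {{vs!i, vs!(Suc i)} | i. Suc i < length vs}"
proof (induction vs rule: pedges.induct)
  case (1 x y r)
  have "{{(x#y#r)!i, (x#y#r)!(Suc i)} | i. Suc i < length (x#y#r)}
     = insert {x,y} {{(y#r)!i, (y#r)!(Suc i)} | i. Suc i < length (y#r)}"
  proof (intro set_eqI iffI)
    fix e assume "e \<in> {{(x#y#r)!i, (x#y#r)!(Suc i)} | i. Suc i < length (x#y#r)}"
    then obtain i where "e = {(x#y#r)!i, (x#y#r)!(Suc i)}" "Suc i < length (x#y#r)" by blast
    then show "e \<in> insert {x,y} {{(y#r)!i, (y#r)!(Suc i)} | i. Suc i < length (y#r)}"
      by (cases i) auto
  next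
    fix e assume "e \<in> insert {x,y} {{(y#r)!i, (y#r)!(Suc i)} | i. Suc i < length (y#r)}"
    then show "e \<in> {{(x#y#r)!i, (x#y#r)!(Suc i)} | i. Suc i < length (x#y#r)}"
    proof
      assume "e = {x,y}" then show ?thesis by force
    next
      assume "e \<in> {{(y#r)!i, (y#r)!(Suc i)} | i. Suc i < length (y#r)}"
      then obtain i where "e = {(y#r)!i, (y#r)!(Suc i)}" "Suc i < length (y#r)" by blast
      then show ?thesis by (intro CollectI exI[of _ "Suc i"]) auto
    qed
  qed
  then show ?case using 1 by simp
qed auto

lemma cycle_set_cedges:
  assumes "vs \<noteq> []"
  shows "{{vs ! i, vs ! ((i + 1) mod length vs)} | i. i < length vs} = cedges vs"
proof (intro set_eqI iffI)
  fix e assume "e \<in> {{vs ! i, vs ! ((i + 1) mod length vs)} | i. i < length vs}"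
  then obtain i where i: "e = {vs ! i, vs ! ((i + 1) mod length vs)}" "i < length vs" by blast
  show "e \<in> cedges vs"
  proof (cases "Suc i < length vs")
    case True then show ?thesis using i by (auto simp: cedges_def pedges_nth)
  next
    case False
    then have "Suc i = length vs" using i by auto
    then have "i = length vs - 1" "(i+1) mod length vs = 0" by auto
    then show ?thesis using i assms by (auto simp: cedges_def last_conv_nth hd_conv_nth)
  qed
next
  fix e assume "e \<in> cedges vs"
  then consider "e = {last vs, hd vs}" | "e \<in> pedges vs" unfolding cedges_def by blast
  then show "e \<in> {{vs ! i, vs ! ((i + 1) mod length vs)} | i. i < length vs}"
  proof cases
    case 1
    then show ?thesis using assms
      by (intro CollectI exI[of _ "length vs - 1"]) (auto simp: last_conv_nth hd_conv_nth)
  next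
    case 2
    then obtain i where "e = {vs!i, vs!(Suc i)}" "Suc i < length vs" by (auto simp: pedges_nth)
    then show ?thesis by (intro CollectI exI[of _ i]) auto
  qed
qed

lemma is_cycle_iff: "is_cycle G C \<longleftrightarrow> (\<exists>vs. length vs \<ge> 3 \<and> distinct vs \<and> set vs \<subseteq> verts G \<and>
       C = cedges vs \<and> C \<subseteq> edges G)"
proof -
  have "\<And>vs::'a list. length vs \<ge> 3 \<Longrightarrow> vs \<noteq> []" by auto
  then show ?thesis unfolding is_cycle_def
  proof (intro iffI; elim exE conjE)
    fix vs assume "\<And>vs::'a list. length vs \<ge> 3 \<Longrightarrow> vs \<noteq> []" "3 \<le> length vs" "distinct vs" "set vs \<subseteq> verts G"
       "C = {{vs ! i, vs ! ((i + 1) mod length vs)} |i. i < length vs}" "C \<subseteq> edges G"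
    then show "\<exists>vs. length vs \<ge> 3 \<and> distinct vs \<and> set vs \<subseteq> verts G \<and>
       C = cedges vs \<and> C \<subseteq> edges G" using cycle_set_cedges[of vs] by (intro exI[of _ vs]) auto
  next
    fix vs assume "\<And>vs::'a list. length vs \<ge> 3 \<Longrightarrow> vs \<noteq> []" "3 \<le> length vs" "distinct vs" "set vs \<subseteq> verts G"
       "C = cedges vs" "C \<subseteq> edges G"
    then show "\<exists>vs. length vs \<ge> 3 \<and> distinct vs \<and> set vs \<subseteq> verts G \<and>
       C = {{vs ! i, vs ! ((i + 1) mod length vs)} |i. i < length vs} \<and> C \<subseteq> edges G" using cycle_set_cedges[of vs] by (intro exI[of _ vs]) auto
  qed
qed


lemma pedges_Cons: "r \<noteq> [] \<Longrightarrow> pedges (x # r) = insert {x, hd r} (pedges r)"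
  by (cases r) auto

lemma pedges_snoc: "r \<noteq> [] \<Longrightarrow> pedges (r @ [x]) = insert {last r, x} (pedges r)"
  by (induction r rule: pedges.induct) auto

lemma pedges_append_sub: "pedges ys \<subseteq> pedges (xs @ ys)"
proof (induction xs)
  case (Cons a xs)
  then show ?case by (cases "xs @ ys") (auto simp: pedges_Cons)
qed auto

lemma pedges_rev: "pedges (rev vs) = pedges vs"
proof (induction vs)
  case (Cons x r)
  show ?case
  proof (cases "r = []")
    case False
    then show ?thesis using Cons by (simp add: pedges_snoc pedges_Cons last_rev insert_commute)
  qed simp
qed simp

lemma cedges_rev: "cedges (rev vs) = cedges vs"
  by (cases "vs = []") (auto simp: cedges_def pedges_rev last_rev hd_rev)

lemma cedges_rotate1: "cedges (rotate1 vs) = cedges vs"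
proof (cases vs)
  case (Cons x r)
  show ?thesis
  proof (cases "r = []")
    case False
    then show ?thesis using Cons
      by (auto simp: cedges_def pedges_snoc pedges_Cons)
  qed (use Cons in simp)
qed simp

lemma cedges_rotate: "cedges (rotate k vs) = cedges vs"
  by (induction k) (auto simp: cedges_rotate1)

lemma pedges_split: "e \<in> pedges vs \<Longrightarrow> \<exists>p1 u w p2. vs = p1 @ u # w # p2 \<and> e = {u, w}"
proof (induction vs rule: pedges.induct)
  case (1 x y r)
  then show ?case
  proof (cases "e = {x,y}")
    case True then show ?thesis by (intro exI[of _ "[]"]) auto
  next
    case False
    then obtain p1 u w p2 where "y # r = p1 @ u # w # p2 \<and> e = {u, w}" using 1 by auto
    then show ?thesis by (intro exI[of _ "x # p1"]) auto
  qed
qed auto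

lemma pedges_sub_set: "e \<in> pedges vs \<Longrightarrow> e \<subseteq> set vs"
  by (induction vs rule: pedges.induct) auto

lemma set_sub_pedges: "length vs \<ge> 2 \<Longrightarrow> set vs \<subseteq> \<Union>(pedges vs)"
proof (induction vs rule: pedges.induct)
  case (1 x y r)
  then show ?case by (cases r) auto
qed auto

lemma closing_not_pedges:
  assumes "distinct ws" "length ws \<ge> 3"
  shows "{last ws, hd ws} \<notin> pedges ws"
proof
  assume "{last ws, hd ws} \<in> pedges ws"
  then obtain p1 u w p2 where ws: "ws = p1 @ u # w # p2" and e: "{last ws, hd ws} = {u, w}"
    using pedges_split by metis
  have lw: "last ws = last (w # p2)" using ws by simp
  have "u \<noteq> last ws" using assms(1) ws lw by (metis distinct.simps(2) distinct_append last_in_set list.distinct(1))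
  then have u: "u = hd ws" and w: "w = last ws" using e by (auto simp: doubleton_eq_iff)
  have "p1 = []"
  proof (rule ccontr)
    assume "p1 \<noteq> []" then have "hd ws \<in> set p1" using ws by simp
    moreover have "u \<notin> set p1" using assms(1) ws by simp
    ultimately show False using u by simp
  qed
  moreover have "p2 = []"
  proof (rule ccontr)
    assume "p2 \<noteq> []" then have "last ws \<in> set p2" using ws by simp
    moreover have "w \<notin> set p2" using assms(1) ws by simp
    ultimately show False using w by simp
  qed
  ultimately show False using ws assms(2) by simp
qed

lemma rot_closing:
  assumes "e \<in> cedges vs"
  shows "\<exists>ws. set ws = set vs \<and> distinct ws = distinct vs \<and> length ws = length vs \<and>
     cedges ws = cedges vs \<and> e = {last ws, hd ws}"
proof (cases "e = {last vs, hd vs}")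
  case True then show ?thesis by blast
next
  case False
  then have "e \<in> pedges vs" using assms by (auto simp: cedges_def)
  then obtain p1 u w p2 where vs: "vs = (p1 @ [u]) @ (w # p2)" and e: "e = {u, w}"
    using pedges_split by fastforce
  let ?ws = "rotate (length (p1 @ [u])) vs"
  have eq: "?ws = (w # p2) @ (p1 @ [u])" using vs rotate_append by metis
  have "set ?ws = set vs" "distinct ?ws = distinct vs" "length ?ws = length vs" "cedges ?ws = cedges vs"
    by (simp_all only: set_rotate distinct_rotate length_rotate cedges_rotate)
  moreover have "e = {last ?ws, hd ?ws}" using eq e by (simp add: insert_commute)
  ultimately show ?thesis by blast
qed

lemma path_rtranclp: "pedges p \<subseteq> edges G \<Longrightarrow> p \<noteq> [] \<Longrightarrow> (adj G)\<^sup>*\<^sup>* (hd p) (last p)"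
proof (induction p rule: pedges.induct)
  case (1 x y r)
  then have "adj G x y" by (auto simp: adj_def)
  moreover have "(adj G)\<^sup>*\<^sup>* y (last (y # r))" using 1 by auto
  ultimately have "(adj G)\<^sup>*\<^sup>* x (last (y # r))" by (rule converse_rtranclp_into_rtranclp)
  then show ?case by simp
qed auto

lemma rtranclp_path: "(adj G)\<^sup>*\<^sup>* x y \<Longrightarrow>
  \<exists>p. p \<noteq> [] \<and> hd p = x \<and> last p = y \<and> distinct p \<and> pedges p \<subseteq> edges G"
proof (induction rule: converse_rtranclp_induct)
  case base
  then show ?case by (intro exI[of _ "[y]"]) auto
next
  case (step x z)
  then obtain q where q: "q \<noteq> []" "hd q = z" "last q = y" "distinct q" "pedges q \<subseteq> edges G" by blast
  show ?case
  proof (cases "x \<in> set q")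
    case True
    then obtain q1 q2 where qs: "q = q1 @ x # q2" by (meson split_list)
    have "pedges (x # q2) \<subseteq> edges G" using q(5) pedges_append_sub[of "x # q2" q1] qs by auto
    then show ?thesis using q qs by (intro exI[of _ "x # q2"]) auto
  next
    case False
    then show ?thesis using q step(1)
      by (intro exI[of _ "x # q"]) (auto simp: pedges_Cons adj_def)
  qed
qed


definition gdel :: "'a graph \<Rightarrow> 'a set \<Rightarrow> 'a graph" where
  "gdel G e = (verts G, edges G - {e})"
definition gadd :: "'a graph \<Rightarrow> 'a set \<Rightarrow> 'a graph" where
  "gadd G e = (verts G, insert e (edges G))"

lemma gdel_simps[simp]: "verts (gdel G e) = verts G" "edges (gdel G e) = edges G - {e}"
  by (auto simp: gdel_def verts_def edges_def)
lemma gadd_simps[simp]: "verts (gadd G e) = verts G" "edges (gadd G e) = insert e (edges G)"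
  by (auto simp: gadd_def verts_def edges_def)
lemma pair_simps[simp]: "verts (V, E) = V" "edges (V, E) = E"
  by (auto simp: verts_def edges_def)

lemma adj_sym: "adj G x y = adj G y x"
  by (simp add: adj_def insert_commute)

lemma rt_sym: "(adj G)\<^sup>*\<^sup>* x y \<Longrightarrow> (adj G)\<^sup>*\<^sup>* y x"
proof (induction rule: rtranclp_induct)
  case (step y z)
  then have "adj G z y" using adj_sym by metis
  then show ?case using step(3) by (rule converse_rtranclp_into_rtranclp)
qed simp

lemma rt_mono: "edges G \<subseteq> edges H \<Longrightarrow> (adj G)\<^sup>*\<^sup>* x y \<Longrightarrow> (adj H)\<^sup>*\<^sup>* x y"
proof -
  assume "edges G \<subseteq> edges H"
  then have "adj G \<le> adj H" by (auto simp: adj_def)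
  then show "(adj G)\<^sup>*\<^sup>* x y \<Longrightarrow> (adj H)\<^sup>*\<^sup>* x y" using rtranclp_mono by blast
qed

lemma wf_edge: "wf_graph G \<Longrightarrow> e \<in> edges G \<Longrightarrow> e \<subseteq> verts G"
  by (auto simp: wf_graph_def)

lemma path_verts: "wf_graph G \<Longrightarrow> pedges p \<subseteq> edges G \<Longrightarrow> length p \<ge> 2 \<Longrightarrow> set p \<subseteq> verts G"
  using set_sub_pedges[of p] wf_edge[of G] by blast

lemma cycle_mono: "is_cycle G C \<Longrightarrow> verts G \<subseteq> verts H \<Longrightarrow> C \<subseteq> edges H \<Longrightarrow> is_cycle H C"
proof -
  assume a: "is_cycle G C" "verts G \<subseteq> verts H" "C \<subseteq> edges H"
  then obtain vs where "length vs \<ge> 3" "distinct vs" "set vs \<subseteq> verts G" "C = cedges vs"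
    unfolding is_cycle_iff by blast
  then show ?thesis unfolding is_cycle_iff using a(2,3) by (intro exI[of _ vs]) auto
qed

lemma acyclic_mono: "acyclic_graph H \<Longrightarrow> verts G \<subseteq> verts H \<Longrightarrow> edges G \<subseteq> edges H \<Longrightarrow> acyclic_graph G"
proof -
  assume a: "acyclic_graph H" "verts G \<subseteq> verts H" "edges G \<subseteq> edges H"
  have "is_cycle G C \<Longrightarrow> is_cycle H C" for C
  proof -
    assume c: "is_cycle G C"
    then have "C \<subseteq> edges G" unfolding is_cycle_def by blast
    then show ?thesis using cycle_mono[OF c a(2)] a(3) by blast
  qed
  then show ?thesis using a(1) unfolding acyclic_graph_def by blast
qed

lemma nonbridge:
  assumes wf: "wf_graph G" and e: "{x, y} \<in> edges G" and xy: "x \<noteq> y"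
    and r: "(adj (gdel G {x, y}))\<^sup>*\<^sup>* x y"
  shows "\<not> acyclic_graph G"
proof -
  obtain p where p: "p \<noteq> []" "hd p = x" "last p = y" "distinct p" "pedges p \<subseteq> edges G - {{x,y}}"
    using rtranclp_path[OF r] by auto
  have l2: "length p \<ge> 2"
  proof (rule ccontr)
    assume "\<not> length p \<ge> 2"
    moreover have "length p \<noteq> 0" using p(1) by simp
    ultimately have "length p = 1" by linarith
    then have "hd p = last p" by (cases p) (auto simp: length_0_conv)
    then show False using p xy by simp
  qed
  have l3: "length p \<ge> 3"
  proof (rule ccontr)
    assume "\<not> length p \<ge> 3"
    then have "length p = 2" using l2 by simp
    then obtain u w where "p = [u, w]" by (metis One_nat_def Suc_1 length_0_conv length_Suc_conv)
    then show False using p by simp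
  qed
  have "set p \<subseteq> verts G" using path_verts[OF wf _ l2] p(5) by blast
  moreover have "cedges p \<subseteq> edges G" using p e by (auto simp: cedges_def insert_commute)
  ultimately have "is_cycle G (cedges p)" unfolding is_cycle_iff using l3 p(4) by blast
  then show ?thesis unfolding acyclic_graph_def by blast
qed

lemma cycle_rot:
  assumes "is_cycle G C" "e \<in> C"
  shows "\<exists>ws. distinct ws \<and> length ws \<ge> 3 \<and> set ws \<subseteq> verts G \<and> C = cedges ws \<and>
     e = {last ws, hd ws} \<and> pedges ws \<subseteq> C - {e}"
proof -
  obtain vs where vs: "length vs \<ge> 3" "distinct vs" "set vs \<subseteq> verts G" "C = cedges vs" "C \<subseteq> edges G"
    using assms(1) unfolding is_cycle_iff by blast
  obtain ws where ws: "set ws = set vs" "distinct ws = distinct vs" "length ws = length vs"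
     "cedges ws = cedges vs" "e = {last ws, hd ws}"
    using rot_closing[of e vs] assms(2) vs(4) by blast
  have "e \<notin> pedges ws" using closing_not_pedges[of ws] ws vs by simp
  then have "pedges ws \<subseteq> C - {e}" using ws vs by (auto simp: cedges_def)
  then show ?thesis using ws vs by (intro exI[of _ ws]) auto
qed



lemma path_unique:
  assumes wf: "wf_graph G" and ac: "acyclic_graph G"
  shows "pedges p \<subseteq> edges G \<Longrightarrow> pedges q \<subseteq> edges G \<Longrightarrow> distinct p \<Longrightarrow> distinct q \<Longrightarrow>
    p \<noteq> [] \<Longrightarrow> q \<noteq> [] \<Longrightarrow> hd p = hd q \<Longrightarrow> last p = last q \<Longrightarrow> p = q"
proof (induction p arbitrary: q)
  case Nil then show ?case by simp
next
  case (Cons x p')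
  show ?case
  proof (cases p')
    case Nil
    then have "last q = hd q" using Cons.prems by simp
    then show ?thesis using Cons.prems Nil
      by (metis distinct.simps(2) hd_Cons_tl last.simps last_in_set)
  next
    fix u p'' assume Cons2: "p' = u # p''"
    obtain w q' where q: "q = x # w # q'"
    proof -
      obtain q0 where q0: "q = x # q0" using Cons.prems by (cases q) auto
      have "q0 \<noteq> []"
      proof
        assume "q0 = []"
        then have "last (x # p') = x" using Cons.prems q0 by simp
        then show False using Cons2 Cons.prems(3) by (metis distinct.simps(2) last_ConsR last_in_set list.distinct(1))
      qed
      then show ?thesis using that q0 by (cases q0) auto
    qed
    show ?thesis
    proof (cases "u = w")
      case True
      have "p' = w # q'"
        using Cons.IH[of "w # q'"] Cons.prems q Cons2 True by (auto simp: pedges_Cons)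
      then show ?thesis using q by simp
    next
      case False
      let ?e = "{x, u}"
      have xu: "x \<noteq> u" using Cons.prems(3) Cons2 by auto
      have eE: "?e \<in> edges G" using Cons.prems(1) Cons2 by auto
      have xn1: "x \<notin> set p'" using Cons.prems(3) by simp
      have xn2: "x \<notin> set (w # q')" using Cons.prems(4) q by simp
      have "?e \<notin> pedges p'" using xn1 pedges_sub_set by blast
      then have "pedges p' \<subseteq> edges (gdel G ?e)" using Cons.prems(1) Cons2 by (auto simp: pedges_Cons)
      then have r1: "(adj (gdel G ?e))\<^sup>*\<^sup>* u (last p')" using path_rtranclp[of p' "gdel G ?e"] Cons2 by simp
      have "?e \<notin> pedges (w # q')" using xn2 pedges_sub_set by blast
      moreover have "?e \<noteq> {x, w}" using False xu by (auto simp: doubleton_eq_iff)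
      ultimately have "pedges q \<subseteq> edges (gdel G ?e)" using Cons.prems(2) q by auto
      then have r2: "(adj (gdel G ?e))\<^sup>*\<^sup>* x (last q)" using path_rtranclp[of q "gdel G ?e"] q by simp
      have "last q = last p'" using Cons.prems(8) Cons2 by simp
      then have "(adj (gdel G ?e))\<^sup>*\<^sup>* x u" using r1 r2 rt_sym[OF r1] by (metis rtranclp_trans)
      then show ?thesis using nonbridge[OF wf eE xu] ac by blast
    qed
  qed
qed

lemma add_acyclic:
  assumes ac: "acyclic_graph G" and nr: "\<not> (adj G)\<^sup>*\<^sup>* x y"
  shows "acyclic_graph (gadd G {x, y})"
  unfolding acyclic_graph_def
proof
  assume "\<exists>C. is_cycle (gadd G {x, y}) C"
  then obtain C where C: "is_cycle (gadd G {x, y}) C" by blast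
  show False
  proof (cases "{x, y} \<in> C")
    case False
    then have "C \<subseteq> edges G" using C unfolding is_cycle_def by auto
    then have "is_cycle G C" using cycle_mono[OF C] by simp
    then show False using ac unfolding acyclic_graph_def by blast
  next
    case True
    then obtain ws where ws: "distinct ws" "length ws \<ge> 3" "{x, y} = {last ws, hd ws}" "pedges ws \<subseteq> C - {{x,y}}"
      using cycle_rot[OF C] by blast
    have "C \<subseteq> insert {x,y} (edges G)" using C unfolding is_cycle_def by auto
    then have "pedges ws \<subseteq> edges G" using ws(4) by blast
    moreover have "ws \<noteq> []" using ws(2) by auto
    ultimately have r: "(adj G)\<^sup>*\<^sup>* (hd ws) (last ws)" using path_rtranclp[of ws G] by blast
    then show False using nr rt_sym[OF r] ws(3) by (auto simp: doubleton_eq_iff)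
  qed
qed



lemma add_unique:
  assumes wf: "wf_graph G" and ac: "acyclic_graph G"
    and C1: "is_cycle (gadd G e) C1" and C2: "is_cycle (gadd G e) C2"
  shows "C1 = C2"
proof -
  have ein: "e \<in> C" if C: "is_cycle (gadd G e) C" for C
  proof (rule ccontr)
    assume "e \<notin> C"
    then have "C \<subseteq> edges G" using C unfolding is_cycle_def by auto
    then have "is_cycle G C" using cycle_mono[OF C] by simp
    then show False using ac unfolding acyclic_graph_def by blast
  qed
  have path: "\<exists>ws. distinct ws \<and> length ws \<ge> 3 \<and> C = cedges ws \<and> e = {last ws, hd ws} \<and> pedges ws \<subseteq> edges G"
    if C: "is_cycle (gadd G e) C" for C
  proof -
    obtain ws where ws: "distinct ws" "length ws \<ge> 3" "C = cedges ws" "e = {last ws, hd ws}" "pedges ws \<subseteq> C - {e}"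
      using cycle_rot[OF C ein[OF C]] by blast
    have "C \<subseteq> insert e (edges G)" using C unfolding is_cycle_def by auto
    then have "pedges ws \<subseteq> edges G" using ws(5) by blast
    then show ?thesis using ws by blast
  qed
  obtain p where p: "distinct p" "length p \<ge> 3" "C1 = cedges p" "e = {last p, hd p}" "pedges p \<subseteq> edges G"
    using path[OF C1] by blast
  obtain q where q: "distinct q" "length q \<ge> 3" "C2 = cedges q" "e = {last q, hd q}" "pedges q \<subseteq> edges G"
    using path[OF C2] by blast
  have pne: "p \<noteq> []" "q \<noteq> []" using p(2) q(2) by auto
  consider "hd p = hd q \<and> last p = last q" | "hd p = last q \<and> last p = hd q"
    using doubleton_eq_iff[of "last p" "hd p" "last q" "hd q"] p(4) q(4) by blast
  then show ?thesis
  proof cases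
    case 1
    have "p = q" by (rule path_unique[OF wf ac p(5) q(5) p(1) q(1) pne]) (use 1 in auto)
    then show ?thesis using p q by simp
  next
    case 2
    have "pedges (rev q) \<subseteq> edges G" using q(5) by (simp add: pedges_rev)
    moreover have "hd p = hd (rev q)" "last p = last (rev q)" using 2 pne by (auto simp: hd_rev last_rev)
    ultimately have "p = rev q" by (intro path_unique[OF wf ac p(5) _ p(1)]) (use q(1) pne in auto)
    then show ?thesis using p q by (simp add: cedges_rev)
  qed
qed

lemma reach_add:
  assumes "(adj (gadd G {u, v}))\<^sup>*\<^sup>* x y"
  shows "(adj G)\<^sup>*\<^sup>* x y \<or> ((adj G)\<^sup>*\<^sup>* x u \<and> (adj G)\<^sup>*\<^sup>* v y) \<or> ((adj G)\<^sup>*\<^sup>* x v \<and> (adj G)\<^sup>*\<^sup>* u y)"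
  using assms
proof (induction rule: rtranclp_induct)
  case (step y z)
  have "adj G y z \<or> (y = u \<and> z = v) \<or> (y = v \<and> z = u)"
    using step(2) by (auto simp: adj_def doubleton_eq_iff)
  then show ?case
  proof (elim disjE)
    assume "adj G y z" then show ?case using step(3) by (meson rtranclp.rtrancl_into_rtrancl)
  next
    assume "y = u \<and> z = v" then show ?case using step(3) by auto
  next
    assume "y = v \<and> z = u" then show ?case using step(3) by auto
  qed
qed simp

lemma reach_verts: "wf_graph G \<Longrightarrow> v \<in> verts G \<Longrightarrow> (adj G)\<^sup>*\<^sup>* v y \<Longrightarrow> y \<in> verts G"
proof -
  assume wf: "wf_graph G" and v: "v \<in> verts G"
  show "(adj G)\<^sup>*\<^sup>* v y \<Longrightarrow> y \<in> verts G"
  proof (induction rule: rtranclp_induct)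
    case (step y z)
    then show ?case using wf_edge[OF wf, of "{y,z}"] by (auto simp: adj_def)
  qed (use v in simp)
qed

lemma pf_of_le1:
  assumes wf: "wf_graph G" and le1: "\<And>C1 C2. is_cycle G C1 \<Longrightarrow> is_cycle G C2 \<Longrightarrow> C1 = C2"
  shows "pseudoforest G"
  unfolding pseudoforest_def
proof (intro conjI ballI wf)
  fix v assume v: "v \<in> verts G"
  define S where "S = {y. reach G v y}"
  have K: "component G v = (S, {e \<in> edges G. e \<subseteq> S})"
    unfolding component_def induced_def S_def by simp
  have SV: "S \<subseteq> verts G" unfolding S_def reach_def using reach_verts[OF wf] by blast
  have vS: "v \<in> S" unfolding S_def reach_def using v by simp
  have fS: "finite S" using SV wf finite_subset unfolding wf_graph_def by blast
  have "\<forall>e\<in>{e \<in> edges G. e \<subseteq> S}. \<exists>x y. x \<noteq> y \<and> e = {x, y} \<and> x \<in> S \<and> y \<in> S"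
  proof
    fix e assume e: "e \<in> {e \<in> edges G. e \<subseteq> S}"
    then obtain x y where "x \<noteq> y" "e = {x, y}" using wf unfolding wf_graph_def by blast
    then show "\<exists>x y. x \<noteq> y \<and> e = {x, y} \<and> x \<in> S \<and> y \<in> S" using e by blast
  qed
  then have wfK: "wf_graph (component G v)"
    unfolding K wf_graph_def using fS by simp
  have toK: "(adj (component G v))\<^sup>*\<^sup>* v y" if "reach G v y" for y
  proof -
    have "(adj G)\<^sup>*\<^sup>* v y" using that unfolding reach_def by simp
    then show ?thesis
    proof (induction rule: rtranclp_induct)
      case (step y z)
      have "y \<in> S" "z \<in> S" using step(1,2) v unfolding S_def reach_def by auto
      then have "adj (component G v) y z" using step(2) unfolding K by (auto simp: adj_def)
      then show ?case using step(3) by (meson rtranclp.rtrancl_into_rtrancl)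
    qed simp
  qed
  have conK: "connected_graph (component G v)"
    unfolding connected_graph_def
  proof (intro conjI ballI)
    show "verts (component G v) \<noteq> {}" using vS K by auto
    fix x y assume "x \<in> verts (component G v)" "y \<in> verts (component G v)"
    then have "x \<in> S" "y \<in> S" using K by auto
    then have "(adj (component G v))\<^sup>*\<^sup>* v x" "(adj (component G v))\<^sup>*\<^sup>* v y" using toK S_def by auto
    then have "(adj (component G v))\<^sup>*\<^sup>* x y" using rt_sym by (metis rtranclp_trans)
    then show "reach (component G v) x y" unfolding reach_def using \<open>x \<in> S\<close> K by simp
  qed
  have cyc: "is_cycle G C" if "is_cycle (component G v) C" for C
  proof -
    have "C \<subseteq> edges (component G v)" using that unfolding is_cycle_def by blast
    then have "C \<subseteq> edges G" using K by auto
    moreover have "verts (component G v) \<subseteq> verts G" using K SV by simp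
    ultimately show ?thesis using cycle_mono[OF that] by blast
  qed
  show "is_tree (component G v) \<or> unicyclic (component G v)"
  proof (cases "\<exists>C. is_cycle (component G v) C")
    case True
    then have "\<exists>!C. is_cycle (component G v) C" using cyc le1 by blast
    then show ?thesis using wfK conK unfolding unicyclic_def by blast
  next
    case False
    then show ?thesis using wfK conK unfolding is_tree_def acyclic_graph_def by blast
  qed
qed

lemma wf_two_switch:
  assumes wf: "wf_graph G" and i: "interchangeable G a b c d"
  shows "wf_graph (two_switch G a b c d)"
proof -
  have ab: "{a,b} \<subseteq> verts G" "{c,d} \<subseteq> verts G" using i wf_edge[OF wf] unfolding interchangeable_def by auto
  have ne: "a \<noteq> c" "b \<noteq> d" using i unfolding interchangeable_def by auto
  have T: "two_switch G a b c d = (verts G, (edges G - {{a,b},{c,d}}) \<union> {{a,c},{b,d}})"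
    using i by (simp add: two_switch_def)
  show ?thesis unfolding T wf_graph_def pair_simps
  proof (intro conjI ballI)
    show "finite (verts G)" using wf unfolding wf_graph_def by blast
    fix e assume e: "e \<in> edges G - {{a, b}, {c, d}} \<union> {{a, c}, {b, d}}"
    show "\<exists>x y. x \<noteq> y \<and> e = {x, y} \<and> x \<in> verts G \<and> y \<in> verts G"
    proof (cases "e \<in> edges G")
      case True then show ?thesis using wf unfolding wf_graph_def by blast
    next
      case False
      then have "e = {a,c} \<or> e = {b,d}" using e by blast
      then show ?thesis using ab ne by blast
    qed
  qed
qed



lemma wf_sub: "wf_graph G \<Longrightarrow> verts H = verts G \<Longrightarrow> edges H \<subseteq> edges G \<Longrightarrow> wf_graph H"
  unfolding wf_graph_def by (metis subsetD)

lemma wf_gadd: "wf_graph G \<Longrightarrow> x \<noteq> y \<Longrightarrow> x \<in> verts G \<Longrightarrow> y \<in> verts G \<Longrightarrow> wf_graph (gadd G {x, y})"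
  unfolding wf_graph_def by auto

lemma edge_ne: "wf_graph G \<Longrightarrow> {a, b} \<in> edges G \<Longrightarrow> a \<noteq> b"
  unfolding wf_graph_def by (metis doubleton_eq_iff)

lemma side_path:
  assumes "\<forall>e\<in>E1. e \<subseteq> V1" "\<forall>e\<in>E2. e \<subseteq> V2" "V1 \<inter> V2 = {}"
  shows "pedges p \<subseteq> E1 \<union> E2 \<Longrightarrow> p \<noteq> [] \<Longrightarrow> hd p \<in> V1 \<Longrightarrow> set p \<subseteq> V1"
proof (induction p rule: pedges.induct)
  case (1 x y r)
  have e: "{x, y} \<in> E1 \<union> E2" using 1(2) by simp
  have "{x, y} \<notin> E2"
  proof
    assume "{x, y} \<in> E2"
    then have "x \<in> V2" using assms(2) by blast
    then show False using assms(3) 1(4) by auto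
  qed
  then have "{x, y} \<in> E1" using e by blast
  then have "y \<in> V1" using assms(1) by blast
  then have "set (y # r) \<subseteq> V1" using 1 by simp
  then show ?case using 1(4) by simp
qed auto

lemma cedges_sub: "e \<in> cedges vs \<Longrightarrow> vs \<noteq> [] \<Longrightarrow> e \<subseteq> set vs \<and> e \<noteq> {}"
  unfolding cedges_def using pedges_sub_set[of e vs] pedges_split[of e vs] by auto

lemma side_cycle:
  assumes h1: "\<forall>e\<in>E1. e \<subseteq> V1" and h2: "\<forall>e\<in>E2. e \<subseteq> V2" and d: "V1 \<inter> V2 = {}"
    and C: "is_cycle H C" and HE: "edges H \<subseteq> E1 \<union> E2" and HV: "verts H \<subseteq> V1 \<union> V2"
  shows "is_cycle (V1, E1) C \<or> is_cycle (V2, E2) C"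
proof -
  obtain vs where vs: "length vs \<ge> 3" "distinct vs" "set vs \<subseteq> verts H" "C = cedges vs" "C \<subseteq> edges H"
    using C unfolding is_cycle_iff by blast
  have ne: "vs \<noteq> []" using vs(1) by auto
  have pe: "pedges vs \<subseteq> E1 \<union> E2" using vs HE unfolding cedges_def by blast
  have hd: "hd vs \<in> V1 \<union> V2" using vs(3) HV ne hd_in_set by blast
  show ?thesis
  proof (cases "hd vs \<in> V1")
    case True
    then have sv: "set vs \<subseteq> V1" using side_path[OF h1 h2 d pe ne] by blast
    have "C \<subseteq> E1"
    proof
      fix e assume e: "e \<in> C"
      then have "e \<subseteq> V1" "e \<noteq> {}" using cedges_sub[of e vs] vs(4) ne sv by auto
      moreover have "e \<in> E1 \<union> E2" using e vs(5) HE by blast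
      ultimately show "e \<in> E1" using h2 d by blast
    qed
    then have "is_cycle (V1, E1) C" unfolding is_cycle_iff using vs sv by auto
    then show ?thesis by blast
  next
    case False
    then have h: "hd vs \<in> V2" using hd by blast
    have d': "V2 \<inter> V1 = {}" using d by blast
    have pe': "pedges vs \<subseteq> E2 \<union> E1" using pe by blast
    have sv: "set vs \<subseteq> V2" using side_path[OF h2 h1 d' pe' ne h] by blast
    have "C \<subseteq> E2"
    proof
      fix e assume e: "e \<in> C"
      then have "e \<subseteq> V2" "e \<noteq> {}" using cedges_sub[of e vs] vs(4) ne sv by auto
      moreover have "e \<in> E1 \<union> E2" using e vs(5) HE by blast
      ultimately show "e \<in> E2" using h1 d by blast
    qed
    then have "is_cycle (V2, E2) C" unfolding is_cycle_iff using vs sv by auto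
    then show ?thesis by blast
  qed
qed

lemma sep:
  assumes h1: "\<forall>e\<in>E1. e \<subseteq> V1" and h2: "\<forall>e\<in>E2. e \<subseteq> V2" and d: "V1 \<inter> V2 = {}"
    and HE: "edges H \<subseteq> E1 \<union> E2" and r: "(adj H)\<^sup>*\<^sup>* x y" and x: "x \<in> V1"
  shows "y \<in> V1"
proof -
  obtain p where p: "p \<noteq> []" "hd p = x" "last p = y" "pedges p \<subseteq> edges H"
    using rtranclp_path[OF r] by blast
  have "set p \<subseteq> V1" using side_path[OF h1 h2 d _ p(1)] p(4) HE x p(2) by blast
  then show ?thesis using p(1,3) last_in_set by blast
qed



lemma part1:
  assumes F: "is_forest F" and i: "interchangeable F a b c d"
  shows "p_switch F a b c d"
proof -
  have wf: "wf_graph F" and ac: "acyclic_graph F" using F unfolding is_forest_def by auto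
  have pfF: "pseudoforest F"
  proof (rule pf_of_le1[OF wf])
    fix C1 C2 assume "is_cycle F C1" then show "C1 = C2" using ac unfolding acyclic_graph_def by blast
  qed
  have ab: "{a,b} \<in> edges F" and cd: "{c,d} \<in> edges F" and dis: "{a,b} \<inter> {c,d} = {}"
    using i unfolding interchangeable_def by auto
  have abV: "a \<in> verts F" "b \<in> verts F" "c \<in> verts F" "d \<in> verts F"
    using wf_edge[OF wf ab] wf_edge[OF wf cd] by auto
  have ne: "a \<noteq> c" "b \<noteq> d" "a \<noteq> b" using dis edge_ne[OF wf ab] by auto
  define F0 where "F0 = (verts F, edges F - {{a,b}} - {{c,d}})"
  have F0s: "verts F0 = verts F" "edges F0 = edges F - {{a,b}} - {{c,d}}" unfolding F0_def by simp_all
  have ac0: "acyclic_graph F0" by (rule acyclic_mono[OF ac]) (auto simp: F0s)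
  have wf0: "wf_graph F0" by (rule wf_sub[OF wf]) (auto simp: F0s)
  have T: "two_switch F a b c d = (verts F, (edges F - {{a,b},{c,d}}) \<union> {{a,c},{b,d}})"
    using i by (simp add: two_switch_def)
  have E1: "(edges F - {{a,b},{c,d}}) \<union> {{a,c},{b,d}} = insert {b,d} (insert {a,c} (edges F - {{a,b}} - {{c,d}}))"
    by blast
  have E2: "(edges F - {{a,b},{c,d}}) \<union> {{a,c},{b,d}} = insert {a,c} (insert {b,d} (edges F - {{a,b}} - {{c,d}}))"
    by blast
  have H1: "two_switch F a b c d = gadd (gadd F0 {a,c}) {b,d}"
    unfolding T E1 gadd_def F0_def by simp
  have H2: "two_switch F a b c d = gadd (gadd F0 {b,d}) {a,c}"
    unfolding T E2 gadd_def F0_def by simp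
  have wfH: "wf_graph (two_switch F a b c d)" using wf_two_switch[OF wf i] .
  have le1: "C1 = C2" if C12: "is_cycle (two_switch F a b c d) C1" "is_cycle (two_switch F a b c d) C2" for C1 C2
  proof (cases "(adj F0)\<^sup>*\<^sup>* a c")
    case False
    have a1: "acyclic_graph (gadd F0 {a,c})" using add_acyclic[OF ac0 False] .
    have w1: "wf_graph (gadd F0 {a,c})" using wf_gadd[OF wf0] ne abV F0s by auto
    show ?thesis using add_unique[OF w1 a1, of "{b,d}" C1 C2] C12 unfolding H1 by blast
  next
    case True
    have nbd: "\<not> (adj F0)\<^sup>*\<^sup>* b d"
    proof
      assume bd: "(adj F0)\<^sup>*\<^sup>* b d"
      have sub: "edges F0 \<subseteq> edges (gdel F {a,b})" using F0s by auto
      have "{c,d} \<noteq> {a,b}" using dis by auto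
      then have "adj (gdel F {a,b}) c d" using cd by (simp add: adj_def)
      moreover have "(adj (gdel F {a,b}))\<^sup>*\<^sup>* a c" using rt_mono[OF sub True] .
      moreover have "(adj (gdel F {a,b}))\<^sup>*\<^sup>* d b" using rt_mono[OF sub rt_sym[OF bd]] .
      ultimately have "(adj (gdel F {a,b}))\<^sup>*\<^sup>* a d"
        using rtranclp.rtrancl_into_rtrancl by metis
      then have "(adj (gdel F {a,b}))\<^sup>*\<^sup>* a b"
        using \<open>(adj (gdel F {a,b}))\<^sup>*\<^sup>* d b\<close> by (rule rtranclp_trans)
      then show False using nonbridge[OF wf ab ne(3)] ac by blast
    qed
    have a1: "acyclic_graph (gadd F0 {b,d})" using add_acyclic[OF ac0 nbd] .
    have w1: "wf_graph (gadd F0 {b,d})" using wf_gadd[OF wf0] ne abV F0s by auto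
    show ?thesis using add_unique[OF w1 a1, of "{a,c}" C1 C2] C12 unfolding H2 by blast
  qed
  have "pseudoforest (two_switch F a b c d)" using pf_of_le1[OF wfH le1] by blast
  then show ?thesis unfolding p_switch_def using pfF i by blast
qed


lemma part2:
  assumes F: "is_forest F" and U: "unicyclic U" and disj: "verts F \<inter> verts U = {}"
    and ab: "{a, b} \<in> edges F" and cdF: "{c, d} \<in> edges (Forest U)"
  shows "p_switch (gunion F U) a b c d"
proof -
  define G where "G = gunion F U"
  have wfF: "wf_graph F" and acF: "acyclic_graph F" using F unfolding is_forest_def by auto
  have wfU: "wf_graph U" using U unfolding unicyclic_def by auto
  obtain Z where Z: "is_cycle U Z" and Zu: "\<And>C. is_cycle U C \<Longrightarrow> C = Z"
    using U unfolding unicyclic_def by blast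
  obtain vs where vs: "length vs \<ge> 3" "Z = cedges vs" "Z \<subseteq> edges U"
    using Z unfolding is_cycle_iff by blast
  define f where "f = {last vs, hd vs}"
  have fZ: "f \<in> Z" unfolding f_def vs(2) cedges_def by simp
  have fU: "f \<in> edges U" using fZ vs(3) by blast
  have fcv: "f \<subseteq> cycle_verts U" unfolding cycle_verts_def using fZ Z by blast
  have cdU: "{c,d} \<in> edges U" and cdnc: "\<not> {c,d} \<subseteq> cycle_verts U"
    using cdF unfolding Forest_def Cycles_def induced_def by auto
  have fcd: "f \<noteq> {c,d}" using fcv cdnc by blast
  have GV: "verts G = verts F \<union> verts U" and GE: "edges G = edges F \<union> edges U"
    unfolding G_def gunion_def by simp_all
  have h1: "\<forall>e\<in>edges F. e \<subseteq> verts F" and h2: "\<forall>e\<in>edges U. e \<subseteq> verts U"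
    using wf_edge[OF wfF] wf_edge[OF wfU] by blast+
  have wfG: "wf_graph G" unfolding wf_graph_def GV GE
  proof (intro conjI ballI)
    show "finite (verts F \<union> verts U)" using wfF wfU unfolding wf_graph_def by blast
    fix e assume e: "e \<in> edges F \<union> edges U"
    have "\<exists>x y. x \<noteq> y \<and> e = {x, y}"
    proof (cases "e \<in> edges F")
      case True then show ?thesis using wfF unfolding wf_graph_def by blast
    next
      case False then have "e \<in> edges U" using e by blast
      then show ?thesis using wfU unfolding wf_graph_def by blast
    qed
    then obtain x y where xy: "x \<noteq> y" "e = {x, y}" by blast
    have "e \<subseteq> verts F \<union> verts U" using e h1 h2 by blast
    then show "\<exists>x y. x \<noteq> y \<and> e = {x, y} \<and> x \<in> verts F \<union> verts U \<and> y \<in> verts F \<union> verts U"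
      using xy by blast
  qed
  have aV: "a \<in> verts F" "b \<in> verts F" using h1 ab by auto
  have cV: "c \<in> verts U" "d \<in> verts U" using h2 cdU by auto
  have fV: "f \<subseteq> verts U" using h2 fU by blast
  have fne: "f \<noteq> {}" unfolding f_def by simp
  have fab: "f \<noteq> {a,b}"
  proof
    assume "f = {a,b}" then have "a \<in> verts U" using fV by blast
    then show False using aV disj by blast
  qed
  have nab: "a \<noteq> b" using edge_ne[OF wfF ab] .
  have dd: "a \<noteq> c" "a \<noteq> d" "b \<noteq> c" "b \<noteq> d" using aV cV disj by blast+
  have nac: "a \<noteq> c" "b \<noteq> d" using dd by blast+
  have nAC: "{a,c} \<notin> edges F \<union> edges U"
  proof
    assume "{a,c} \<in> edges F \<union> edges U"
    then have "c \<in> verts F \<or> a \<in> verts U" using h1 h2 by blast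
    then show False using aV cV disj by blast
  qed
  have nBD: "{b,d} \<notin> edges F \<union> edges U"
  proof
    assume "{b,d} \<in> edges F \<union> edges U"
    then have "d \<in> verts F \<or> b \<in> verts U" using h1 h2 by blast
    then show False using aV cV disj by blast
  qed
  have i: "interchangeable G a b c d"
    unfolding interchangeable_def GE using ab cdU dd nAC nBD by simp
  define G' where "G' = gdel G f"
  have wfG': "wf_graph G'" unfolding G'_def by (rule wf_sub[OF wfG]) auto
  have acG': "acyclic_graph G'"
    unfolding acyclic_graph_def
  proof
    assume "\<exists>C. is_cycle G' C"
    then obtain C where C: "is_cycle G' C" by blast
    have CE: "C \<subseteq> edges G'" using C unfolding is_cycle_def by blast
    have "is_cycle (verts F, edges F) C \<or> is_cycle (verts U, edges U) C"
      by (rule side_cycle[OF h1 h2 disj C]) (auto simp: G'_def GV GE)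
    then show False
    proof
      assume "is_cycle (verts F, edges F) C"
      then have "is_cycle F C" by (simp add: verts_def edges_def)
      then show False using acF unfolding acyclic_graph_def by blast
    next
      assume "is_cycle (verts U, edges U) C"
      then have "is_cycle U C" by (simp add: verts_def edges_def)
      then have "C = Z" using Zu by blast
      then have "f \<in> edges G'" using fZ CE by blast
      then show False unfolding G'_def by simp
    qed
  qed
  have Gadd: "G = gadd G' f" unfolding G'_def gadd_def gdel_def using fU GE
    by (simp add: insert_absorb verts_def edges_def G_def gunion_def)
  have pfG: "pseudoforest G"
  proof (rule pf_of_le1[OF wfG])
    fix C1 C2 assume "is_cycle G C1" "is_cycle G C2"
    then show "C1 = C2" using add_unique[OF wfG' acG', of f C1 C2] Gadd by simp
  qed
  define G0 where "G0 = (verts G, edges G - {f} - {{a,b}} - {{c,d}})"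
  have G0s: "verts G0 = verts G" "edges G0 = edges G - {f} - {{a,b}} - {{c,d}}" unfolding G0_def by simp_all
  have ac0: "acyclic_graph G0" by (rule acyclic_mono[OF acG']) (auto simp: G0s G'_def)
  have wf0: "wf_graph G0" by (rule wf_sub[OF wfG]) (auto simp: G0s)
  have E0: "edges G0 \<subseteq> edges F \<union> edges U" using G0s GE by auto
  have nac0: "\<not> (adj G0)\<^sup>*\<^sup>* a c"
  proof
    assume "(adj G0)\<^sup>*\<^sup>* a c"
    then have "c \<in> verts F" using sep[OF h1 h2 disj E0] aV by blast
    then show False using cV disj by blast
  qed
  define G1 where "G1 = gadd G0 {a,c}"
  have ac1: "acyclic_graph G1" unfolding G1_def using add_acyclic[OF ac0 nac0] .
  have wf1: "wf_graph G1" unfolding G1_def using wf_gadd[OF wf0] nac aV cV G0s GV by auto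
  have nbd: "\<not> (adj G1)\<^sup>*\<^sup>* b d"
  proof
    assume "(adj G1)\<^sup>*\<^sup>* b d"
    then have "(adj G0)\<^sup>*\<^sup>* b d \<or> ((adj G0)\<^sup>*\<^sup>* b a \<and> (adj G0)\<^sup>*\<^sup>* c d) \<or> ((adj G0)\<^sup>*\<^sup>* b c \<and> (adj G0)\<^sup>*\<^sup>* a d)"
      unfolding G1_def by (rule reach_add)
    then show False
    proof (elim disjE conjE)
      assume "(adj G0)\<^sup>*\<^sup>* b d"
      then have "d \<in> verts F" using sep[OF h1 h2 disj E0] aV by blast
      then show False using cV disj by blast
    next
      assume "(adj G0)\<^sup>*\<^sup>* b c"
      then have "c \<in> verts F" using sep[OF h1 h2 disj E0] aV by blast
      then show False using cV disj by blast
    next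
      assume ba: "(adj G0)\<^sup>*\<^sup>* b a"
      have sub: "edges G0 \<subseteq> edges (gdel G' {b,a})" using G0s unfolding G'_def by auto
      have "(adj (gdel G' {b,a}))\<^sup>*\<^sup>* b a" using rt_mono[OF sub ba] .
      moreover have "{b,a} \<in> edges G'" using ab fab GE unfolding G'_def by (auto simp: insert_commute)
      ultimately show False using nonbridge[OF wfG' _ nab[symmetric]] acG' by blast
    qed
  qed
  define G2 where "G2 = gadd G1 {b,d}"
  have ac2: "acyclic_graph G2" unfolding G2_def using add_acyclic[OF ac1 nbd] .
  have wf2: "wf_graph G2" unfolding G2_def using wf_gadd[OF wf1] nac aV cV G0s GV G1_def by auto
  have T: "two_switch G a b c d = (verts G, (edges G - {{a,b},{c,d}}) \<union> {{a,c},{b,d}})"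
    using i by (simp add: two_switch_def)
  have fG: "f \<in> edges G" using fU GE by blast
  have EE: "(edges G - {{a,b},{c,d}}) \<union> {{a,c},{b,d}} = insert f (insert {b,d} (insert {a,c} (edges G - {f} - {{a,b}} - {{c,d}})))"
    using fG fab fcd by blast
  have H: "two_switch G a b c d = gadd G2 f"
    unfolding T EE G2_def G1_def gadd_def G0_def by simp
  have wfH: "wf_graph (two_switch G a b c d)" using wf_two_switch[OF wfG i] .
  have pfH: "pseudoforest (two_switch G a b c d)"
  proof (rule pf_of_le1[OF wfH])
    fix C1 C2 assume "is_cycle (two_switch G a b c d) C1" "is_cycle (two_switch G a b c d) C2"
    then show "C1 = C2" using add_unique[OF wf2 ac2, of f C1 C2] H by simp
  qed
  show ?thesis unfolding p_switch_def G_def[symmetric] using pfG i pfH by blast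
qed


theorem lemma4p3:
  fixes F U :: "'a graph"
  assumes "is_forest F" and "unicyclic U" and "verts F \<inter> verts U = {}"
  shows "(\<forall>a b c d. interchangeable F a b c d \<longrightarrow> p_switch F a b c d) \<and>
         (\<forall>a b c d. {a, b} \<in> edges F \<and> {c, d} \<in> edges (Forest U) \<longrightarrow>
            p_switch (gunion F U) a b c d)"
proof (intro conjI allI impI)
  fix a b c d
  assume "interchangeable F a b c d"
  then show "p_switch F a b c d" by (rule part1[OF assms(1)])
next
  fix a b c d
  assume h: "{a, b} \<in> edges F \<and> {c, d} \<in> edges (Forest U)"
  show "p_switch (gunion F U) a b c d" using part2[OF assms] h by blast
qed

end
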